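(* Every non-empty partial metric space $(X,p_X)$ has at least two p-Cauchy completions that are not isometric; that is, there are p-Cauchy completions $(\bar X,i)$ and $(\tilde X,j)$ of $X$ for which there is no bijective isometry $g\colon\bar X\to\tilde X$ with $g\circ i=j$.
   Context: A partial metric on a set $X$ is a function $p_X\colon X\times X\to\mathbb{R}_{\geq0}$ such that for all $x,y,z\in X$: (P1) $p_X(x,x)=p_X(x,y)=p_X(y,y)$ implies $x=y$; (P2) $p_X(x,x)\leq p_X(x,y)$; (P3) $p_X(x,y)=p_X(y,x)$; (P4) $p_X(x,z)+p_X(y,y)\leq p_X(x,y)+p_X(y,z)$. For $x\in X$ and $\varepsilon>0$, $B_\varepsilon(x)=\{y\in X: p_X(x,y)<p_X(x,x)+\varepsilon\}$. A subset $A\subseteq X$ is dense in $X$ if for every $x\in X$ and $\varepsilon>0$ there is $y\in A$ with $y\in B_\varepsilon(x)$. A sequence $(x_n)$ in $X$ p-converges to $x\in X$ if $p_X(x,x)=\lim_{n}p_X(x,x_n)=\lim_{n}p_X(x_n,x_n)$; it is p-Cauchy if $\lim_{n,m\to\infty}p_X(x_n,x_m)$ exists and is finite. $X$ is p-Cauchy complete if every p-Cauchy sequence p-converges. An isometric embedding (isometry) $i\colon X\to Y$ is a map with $p_Y(i(x),i(y))=p_X(x,y)$ for all $x,y$. A p-Cauchy completion of $X$ is a pair $(\bar X,i)$ where $\bar X$ is a p-Cauchy complete partial metric space and $i\colon X\to\bar X$ is an isometric embedding with $i(X)$ dense in $\bar X$. *)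

theory Defs
  imports "HOL-Analysis.Analysis"
begin

definition partial_metric_on :: "'a set \<Rightarrow> ('a \<Rightarrow> 'a \<Rightarrow> real) \<Rightarrow> bool" where
  "partial_metric_on X p \<longleftrightarrow>
     (\<forall>x\<in>X. \<forall>y\<in>X. p x y \<ge> 0) \<and>
     (\<forall>x\<in>X. \<forall>y\<in>X. p x x = p x y \<and> p x y = p y y \<longrightarrow> x = y) \<and>
     (\<forall>x\<in>X. \<forall>y\<in>X. p x x \<le> p x y) \<and>
     (\<forall>x\<in>X. \<forall>y\<in>X. p x y = p y x) \<and>
     (\<forall>x\<in>X. \<forall>y\<in>X. \<forall>z\<in>X. p x z + p y y \<le> p x y + p y z)"

definition pball :: "'a set \<Rightarrow> ('a \<Rightarrow> 'a \<Rightarrow> real) \<Rightarrow> 'a \<Rightarrow> real \<Rightarrow> 'a set" where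
  "pball X p x \<epsilon> = {y \<in> X. p x y < p x x + \<epsilon>}"

definition pdense :: "'a set \<Rightarrow> ('a \<Rightarrow> 'a \<Rightarrow> real) \<Rightarrow> 'a set \<Rightarrow> bool" where
  "pdense X p A \<longleftrightarrow> (\<forall>x\<in>X. \<forall>\<epsilon>>0. \<exists>y\<in>A. y \<in> pball X p x \<epsilon>)"

definition p_converges :: "('a \<Rightarrow> 'a \<Rightarrow> real) \<Rightarrow> (nat \<Rightarrow> 'a) \<Rightarrow> 'a \<Rightarrow> bool" where
  "p_converges p s x \<longleftrightarrow>
     (\<lambda>n. p x (s n)) \<longlonglongrightarrow> p x x \<and> (\<lambda>n. p (s n) (s n)) \<longlonglongrightarrow> p x x"

definition p_cauchy :: "('a \<Rightarrow> 'a \<Rightarrow> real) \<Rightarrow> (nat \<Rightarrow> 'a) \<Rightarrow> bool" where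
  "p_cauchy p s \<longleftrightarrow>
     (\<exists>L::real. \<forall>\<epsilon>>0. \<exists>N. \<forall>n\<ge>N. \<forall>m\<ge>N. \<bar>p (s n) (s m) - L\<bar> < \<epsilon>)"

definition p_cauchy_complete :: "'a set \<Rightarrow> ('a \<Rightarrow> 'a \<Rightarrow> real) \<Rightarrow> bool" where
  "p_cauchy_complete X p \<longleftrightarrow>
     (\<forall>s. (\<forall>n. s n \<in> X) \<and> p_cauchy p s \<longrightarrow> (\<exists>x\<in>X. p_converges p s x))"

definition isometry_on :: "'a set \<Rightarrow> ('a \<Rightarrow> 'a \<Rightarrow> real) \<Rightarrow> ('b \<Rightarrow> 'b \<Rightarrow> real) \<Rightarrow> ('a \<Rightarrow> 'b) \<Rightarrow> bool" where
  "isometry_on X pX pY f \<longleftrightarrow> (\<forall>x\<in>X. \<forall>y\<in>X. pY (f x) (f y) = pX x y)"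

definition p_cauchy_completion ::
  "'a set \<Rightarrow> ('a \<Rightarrow> 'a \<Rightarrow> real) \<Rightarrow> 'b set \<Rightarrow> ('b \<Rightarrow> 'b \<Rightarrow> real) \<Rightarrow> ('a \<Rightarrow> 'b) \<Rightarrow> bool" where
  "p_cauchy_completion X pX Y pY i \<longleftrightarrow>
     partial_metric_on Y pY \<and> p_cauchy_complete Y pY \<and>
     i ` X \<subseteq> Y \<and> isometry_on X pX pY i \<and> pdense Y pY (i ` X)"

end

theory Submission
  imports Defs
begin


definition dcomplete :: "'b set \<Rightarrow> ('b \<Rightarrow> 'b \<Rightarrow> real) \<Rightarrow> bool" where
  "dcomplete S D \<longleftrightarrow> (\<forall>s::nat\<Rightarrow>'b. (\<forall>n. s n \<in> S) \<and> (\<forall>\<epsilon>::real>0. \<exists>N::nat. \<forall>n\<ge>N. \<forall>m\<ge>N. D (s n) (s m) < \<epsilon>)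
      \<longrightarrow> (\<exists>z\<in>S. \<forall>\<epsilon>::real>0. \<exists>N::nat. \<forall>n\<ge>N. D (s n) z < \<epsilon>))"

definition mhyps :: "'b set \<Rightarrow> ('b \<Rightarrow> 'b \<Rightarrow> real) \<Rightarrow> ('b \<Rightarrow> real) \<Rightarrow> bool" where
  "mhyps S D W \<longleftrightarrow> (\<forall>a\<in>S. \<forall>b\<in>S. D a b \<ge> 0) \<and> (\<forall>a\<in>S. \<forall>b\<in>S. D a b = D b a)
     \<and> (\<forall>a\<in>S. \<forall>b\<in>S. D a b = 0 \<longleftrightarrow> a = b)
     \<and> (\<forall>a\<in>S. \<forall>b\<in>S. \<forall>c\<in>S. D a c \<le> D a b + D b c)
     \<and> (\<forall>a\<in>S. W a \<ge> 0) \<and> (\<forall>a\<in>S. \<forall>b\<in>S. W a - W b \<le> D a b)"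

lemma mhypsD:
  assumes "mhyps S D W"
  shows "\<And>a b. a \<in> S \<Longrightarrow> b \<in> S \<Longrightarrow> D a b \<ge> 0"
    "\<And>a b. a \<in> S \<Longrightarrow> b \<in> S \<Longrightarrow> D a b = D b a"
    "\<And>a b. a \<in> S \<Longrightarrow> b \<in> S \<Longrightarrow> D a b = 0 \<longleftrightarrow> a = b"
    "\<And>a b c. a \<in> S \<Longrightarrow> b \<in> S \<Longrightarrow> c \<in> S \<Longrightarrow> D a c \<le> D a b + D b c"
    "\<And>a. a \<in> S \<Longrightarrow> W a \<ge> 0"
    "\<And>a b. a \<in> S \<Longrightarrow> b \<in> S \<Longrightarrow> W a - W b \<le> D a b"
proof -
  note h = assms[unfolded mhyps_def]
  show "\<And>a b. a \<in> S \<Longrightarrow> b \<in> S \<Longrightarrow> D a b \<ge> 0" using h[THEN conjunct1] by simp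
  show "\<And>a b. a \<in> S \<Longrightarrow> b \<in> S \<Longrightarrow> D a b = D b a" using h[THEN conjunct2, THEN conjunct1] by simp
  show "\<And>a b. a \<in> S \<Longrightarrow> b \<in> S \<Longrightarrow> D a b = 0 \<longleftrightarrow> a = b" using h[THEN conjunct2, THEN conjunct2, THEN conjunct1] by simp
  show "\<And>a b c. a \<in> S \<Longrightarrow> b \<in> S \<Longrightarrow> c \<in> S \<Longrightarrow> D a c \<le> D a b + D b c" using h[THEN conjunct2, THEN conjunct2, THEN conjunct2, THEN conjunct1] by simp
  show "\<And>a. a \<in> S \<Longrightarrow> W a \<ge> 0" using h[THEN conjunct2, THEN conjunct2, THEN conjunct2, THEN conjunct2, THEN conjunct1] by simp
  show "\<And>a b. a \<in> S \<Longrightarrow> b \<in> S \<Longrightarrow> W a - W b \<le> D a b" using h[THEN conjunct2, THEN conjunct2, THEN conjunct2, THEN conjunct2, THEN conjunct2] by simp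
qed

lemma mhyps_subset:
  assumes "mhyps S D W" "T \<subseteq> S" shows "mhyps T D W"
proof -
  note m = mhypsD[OF assms(1)]
  have sub: "\<And>a. a \<in> T \<Longrightarrow> a \<in> S" using assms(2) by (rule subsetD)
  show ?thesis unfolding mhyps_def
  proof (intro conjI ballI)
    fix a b c assume "a \<in> T" "b \<in> T" "c \<in> T"
    then have abc: "a \<in> S" "b \<in> S" "c \<in> S" using sub by auto
    show "D a c \<le> D a b + D b c" by (rule m(4)[OF abc])
  next
    fix a b assume "a \<in> T" "b \<in> T"
    then have ab: "a \<in> S" "b \<in> S" using sub by auto
    show "D a b \<ge> 0" by (rule m(1)[OF ab])
    show "D a b = D b a" by (rule m(2)[OF ab])
    show "D a b = 0 \<longleftrightarrow> a = b" by (rule m(3)[OF ab])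
    show "W a - W b \<le> D a b" by (rule m(6)[OF ab])
  next
    fix a assume "a \<in> T"
    then show "W a \<ge> 0" using sub m(5) by blast
  qed
qed

lemma pm_from_metric:
  assumes h: "mhyps S D W"
  shows "partial_metric_on S (\<lambda>a b. (D a b + W a + W b)/2)"
  unfolding partial_metric_on_def
proof (intro conjI ballI impI)
  fix x y assume xy: "x \<in> S" "y \<in> S"
  note m = mhypsD[OF h]
  have "D x x = 0" "D y y = 0" using m(3) xy by auto
  moreover note m(1)[OF xy] m(2)[OF xy] m(5)[OF xy(1)] m(5)[OF xy(2)] m(6)[OF xy] m(6)[OF xy(2,1)]
  ultimately show "0 \<le> (D x y + W x + W y) / 2" "(D x x + W x + W x) / 2 \<le> (D x y + W x + W y) / 2"
     "(D x y + W x + W y) / 2 = (D y x + W y + W x) / 2" by (simp_all add: field_simps)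
  assume "(D x x + W x + W x) / 2 = (D x y + W x + W y) / 2 \<and> (D x y + W x + W y) / 2 = (D y y + W y + W y) / 2"
  with \<open>D x x = 0\<close> \<open>D y y = 0\<close> have "D x y = 0" by argo
  then show "x = y" using m(3)[OF xy] by blast
next
  fix x y z assume xyz: "x \<in> S" "y \<in> S" "z \<in> S"
  note m = mhypsD[OF h]
  have "D y y = 0" using m(3) xyz by auto
  moreover have "D x z \<le> D x y + D y z" using m(4) xyz by blast
  ultimately show "(D x z + W x + W z) / 2 + (D y y + W y + W y) / 2 \<le> (D x y + W x + W y) / 2 + (D y z + W y + W z) / 2" by argo
qed

lemma dense_pt:
  assumes h: "mhyps S D W" and "z \<in> S" "x \<in> S" "D z x < e"
  shows "(D z x + W z + W x)/2 < (D z z + W z + W z)/2 + e"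
proof -
  note m = mhypsD[OF h]
  have "D z z = 0" using m(3) assms by auto
  moreover have "W x - W z \<le> D x z" using m(6) assms by blast
  moreover have "D x z = D z x" using m(2) assms by blast
  ultimately show ?thesis using assms(4) by (simp add: field_simps)
qed

lemma pc_from_dcomplete:
  assumes h: "mhyps S D W" and dc: "dcomplete S D"
  shows "p_cauchy_complete S (\<lambda>a b. (D a b + W a + W b)/2)"
  unfolding p_cauchy_complete_def
proof (intro allI impI)
  fix s assume a: "(\<forall>n. s n \<in> S) \<and> p_cauchy (\<lambda>a b. (D a b + W a + W b)/2) s"
  then have sS: "\<And>n. s n \<in> S" by blast
  from a obtain L where L: "\<forall>\<epsilon>>0. \<exists>N. \<forall>n\<ge>N. \<forall>m\<ge>N. \<bar>(D (s n) (s m) + W (s n) + W (s m))/2 - L\<bar> < \<epsilon>"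
    unfolding p_cauchy_def by blast
  have Dss: "\<And>n. D (s n) (s n) = 0" using h sS unfolding mhyps_def by blast
  have "\<forall>\<epsilon>>0. \<exists>N. \<forall>n\<ge>N. \<forall>m\<ge>N. D (s n) (s m) < \<epsilon>"
  proof (intro allI impI)
    fix e :: real assume "e > 0"
    then obtain N where N: "\<forall>n\<ge>N. \<forall>m\<ge>N. \<bar>(D (s n) (s m) + W (s n) + W (s m))/2 - L\<bar> < e/4"
      using L by (meson divide_pos_pos zero_less_numeral)
    show "\<exists>N. \<forall>n\<ge>N. \<forall>m\<ge>N. D (s n) (s m) < e"
    proof (intro exI allI impI)
      fix n m assume nm: "N \<le> n" "N \<le> m"
      have 1: "\<bar>(D (s n) (s m) + W (s n) + W (s m))/2 - L\<bar> < e/4" using N nm by blast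
      have 2: "\<bar>(D (s n) (s n) + W (s n) + W (s n))/2 - L\<bar> < e/4" using N nm by blast
      have 3: "\<bar>(D (s m) (s m) + W (s m) + W (s m))/2 - L\<bar> < e/4" using N nm by blast
      show "D (s n) (s m) < e" using 1 2 3 Dss[of n] Dss[of m] unfolding abs_less_iff by argo
    qed
  qed
  then obtain z where z: "z \<in> S" and lim: "\<forall>\<epsilon>>0. \<exists>N. \<forall>n\<ge>N. D (s n) z < \<epsilon>"
    using dc sS unfolding dcomplete_def by blast
  have Dzz: "D z z = 0" using h z unfolding mhyps_def by blast
  note m = mhypsD[OF h]
  have b0: "\<bar>W (s n) - W z\<bar> \<le> D (s n) z" "D z (s n) = D (s n) z" for n
    using m(6)[OF sS[of n] z] m(6)[OF z sS[of n]] m(2)[OF z sS[of n]] by auto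
  have b1: "\<bar>(D z (s n) + W z + W (s n))/2 - (D z z + W z + W z)/2\<bar> \<le> D (s n) z" for n
    using b0[of n] Dzz unfolding abs_le_iff by argo
  have b2: "\<bar>(D (s n) (s n) + W (s n) + W (s n))/2 - (D z z + W z + W z)/2\<bar> \<le> D (s n) z" for n
    using b0[of n] Dzz Dss[of n] unfolding abs_le_iff by argo
  have c1: "(\<lambda>n. (D z (s n) + W z + W (s n))/2) \<longlonglongrightarrow> (D z z + W z + W z)/2"
    unfolding LIMSEQ_iff
  proof (intro allI impI)
    fix r :: real assume "r > 0"
    then obtain N where "\<forall>n\<ge>N. D (s n) z < r" using lim by blast
    then show "\<exists>no. \<forall>n\<ge>no. norm ((D z (s n) + W z + W (s n))/2 - (D z z + W z + W z)/2) < r"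
      using b1 by (metis order_le_less_trans real_norm_def)
  qed
  have c2: "(\<lambda>n. (D (s n) (s n) + W (s n) + W (s n))/2) \<longlonglongrightarrow> (D z z + W z + W z)/2"
    unfolding LIMSEQ_iff
  proof (intro allI impI)
    fix r :: real assume "r > 0"
    then obtain N where "\<forall>n\<ge>N. D (s n) z < r" using lim by blast
    then show "\<exists>no. \<forall>n\<ge>no. norm ((D (s n) (s n) + W (s n) + W (s n))/2 - (D z z + W z + W z)/2) < r"
      using b2 by (metis order_le_less_trans real_norm_def)
  qed
  show "\<exists>x\<in>S. p_converges (\<lambda>a b. (D a b + W a + W b)/2) s x"
    using z c1 c2 unfolding p_converges_def by blast
qed

lemma transfer_completion:
  assumes c: "p_cauchy_completion X p Y pY i" and inj: "inj_on h Y"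
  shows "p_cauchy_completion X p (h ` Y) (\<lambda>a b. pY (inv_into Y h a) (inv_into Y h b)) (h \<circ> i)"
proof -
  let ?g = "inv_into Y h"
  have gh: "\<And>y. y \<in> Y \<Longrightarrow> ?g (h y) = y" using inj by simp
  have pm: "partial_metric_on Y pY" and cc: "p_cauchy_complete Y pY" and iY: "i ` X \<subseteq> Y"
    and iso: "isometry_on X p pY i" and dn: "pdense Y pY (i ` X)"
    using c unfolding p_cauchy_completion_def by auto
  have "partial_metric_on (h ` Y) (\<lambda>a b. pY (?g a) (?g b))"
    using pm unfolding partial_metric_on_def by (auto simp: gh)
  moreover have "p_cauchy_complete (h ` Y) (\<lambda>a b. pY (?g a) (?g b))"
    unfolding p_cauchy_complete_def
  proof (intro allI impI)
    fix s assume a: "(\<forall>n. s n \<in> h ` Y) \<and> p_cauchy (\<lambda>a b. pY (?g a) (?g b)) s"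
    define t where "t n = ?g (s n)" for n
    have tY: "\<forall>n. t n \<in> Y" using a unfolding t_def by (metis inv_into_into)
    have "p_cauchy pY t" using a unfolding t_def p_cauchy_def by simp
    then obtain y where y: "y \<in> Y" "p_converges pY t y" using cc tY unfolding p_cauchy_complete_def by blast
    then show "\<exists>x\<in>h ` Y. p_converges (\<lambda>a b. pY (?g a) (?g b)) s x"
      by (intro bexI[of _ "h y"]) (auto simp: gh p_converges_def t_def)
  qed
  moreover have "(h \<circ> i) ` X \<subseteq> h ` Y" using iY by auto
  moreover have "isometry_on X p (\<lambda>a b. pY (?g a) (?g b)) (h \<circ> i)"
    using iso iY unfolding isometry_on_def by (auto simp: gh image_subset_iff)
  moreover have "pdense (h ` Y) (\<lambda>a b. pY (?g a) (?g b)) ((h \<circ> i) ` X)"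
    unfolding pdense_def
  proof (intro ballI allI impI)
    fix a e assume "a \<in> h ` Y" "(e::real) > 0"
    then obtain y where y: "y \<in> Y" "a = h y" by auto
    then obtain x where "x \<in> X" "i x \<in> pball Y pY y e" using dn \<open>e > 0\<close> unfolding pdense_def by blast
    then show "\<exists>b\<in>(h \<circ> i) ` X. b \<in> pball (h ` Y) (\<lambda>a b. pY (?g a) (?g b)) a e"
      using y iY by (intro bexI[of _ "h (i x)"]) (auto simp: pball_def gh)
  qed
  ultimately show ?thesis unfolding p_cauchy_completion_def by blast
qed



theorem corollary1p5:
  fixes X :: "'a set" and p :: "'a \<Rightarrow> 'a \<Rightarrow> real"
  assumes "partial_metric_on X p" and "X \<noteq> {}"
  shows "\<exists>(Y :: ((nat \<Rightarrow> 'a) set \<times> nat) set) pY i (Z :: ((nat \<Rightarrow> 'a) set \<times> nat) set) pZ j.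
           p_cauchy_completion X p Y pY i \<and> p_cauchy_completion X p Z pZ j \<and>
           \<not> (\<exists>g. bij_betw g Y Z \<and> isometry_on Y pY pZ g \<and> (\<forall>x\<in>X. g (i x) = j x))"
proof -
  have P0: "\<And>x y. x \<in> X \<Longrightarrow> y \<in> X \<Longrightarrow> p x y \<ge> 0"
    using assms(1)[unfolded partial_metric_on_def, THEN conjunct1] by blast
  have P1: "\<And>x y. x \<in> X \<Longrightarrow> y \<in> X \<Longrightarrow> p x x = p x y \<Longrightarrow> p x y = p y y \<Longrightarrow> x = y"
    using assms(1)[unfolded partial_metric_on_def, THEN conjunct2, THEN conjunct1] by blast
  have P2: "\<And>x y. x \<in> X \<Longrightarrow> y \<in> X \<Longrightarrow> p x x \<le> p x y"
    using assms(1)[unfolded partial_metric_on_def, THEN conjunct2, THEN conjunct2, THEN conjunct1] by blast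
  have P3: "\<And>x y. x \<in> X \<Longrightarrow> y \<in> X \<Longrightarrow> p x y = p y x"
    using assms(1)[unfolded partial_metric_on_def, THEN conjunct2, THEN conjunct2, THEN conjunct2, THEN conjunct1] by blast
  have P4: "\<And>x y z. x \<in> X \<Longrightarrow> y \<in> X \<Longrightarrow> z \<in> X \<Longrightarrow> p x z + p y y \<le> p x y + p y z"
    using assms(1)[unfolded partial_metric_on_def, THEN conjunct2, THEN conjunct2, THEN conjunct2, THEN conjunct2] by blast
  obtain x0 where x0: "x0 \<in> X" using assms(2) by blast
  define d where "d x y = (if x \<in> X \<and> y \<in> X then 2 * p x y - p x x - p y y else 0)" for x y
  interpret dX: Metric_space X d
  proof
    fix x y
    show "0 \<le> d x y" using P2[of x y] P2[of y x] P3[of x y] unfolding d_def by auto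
    show "d x y = d y x" using P3[of x y] unfolding d_def by auto
  next
    fix x y assume xy: "x \<in> X" "y \<in> X"
    show "d x y = 0 \<longleftrightarrow> x = y"
    proof
      assume "d x y = 0"
      then have "2 * p x y - p x x - p y y = 0" using xy unfolding d_def by simp
      moreover have "p x x \<le> p x y" "p y y \<le> p x y" using P2[OF xy] P2[OF xy(2,1)] P3[OF xy] by auto
      ultimately show "x = y" using P1[OF xy] by linarith
    qed (simp add: d_def)
  next
    fix x y z assume xyz: "x \<in> X" "y \<in> X" "z \<in> X"
    show "d x z \<le> d x y + d y z" using P4[OF xyz(1,2,3)] xyz unfolding d_def by simp
  qed
  obtain f :: "'a \<Rightarrow> 'a \<Rightarrow> real" and m' where mc: "mcomplete_of m'" and fim: "f \<in> X \<rightarrow> mspace m'"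
    and cl: "mtopology_of m' closure_of f ` X = mspace m'"
    and iso: "\<And>x y. x \<in> X \<Longrightarrow> y \<in> X \<Longrightarrow> mdist m' (f x) (f y) = d x y"
    using dX.metric_completion by metis
  define M where "M = mspace m'"
  define D where "D = mdist m'"
  interpret MD: Metric_space M D unfolding M_def D_def by simp
  have fM: "\<And>x. x \<in> X \<Longrightarrow> f x \<in> M" using fim unfolding M_def by auto
  have fD: "\<And>x y. x \<in> X \<Longrightarrow> y \<in> X \<Longrightarrow> D (f x) (f y) = d x y" using iso unfolding D_def by simp
  have dens: "\<exists>x\<in>X. D z (f x) < e" if "z \<in> M" "e > 0" for z e
  proof -
    have "z \<in> MD.mtopology closure_of f ` X" using cl that unfolding M_def D_def mtopology_of_def by simp
    then have "\<exists>y\<in>f ` X. y \<in> MD.mball z e" using that unfolding MD.metric_closure_of by blast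
    then show ?thesis by (auto simp: MD.in_mball)
  qed
  have dcM: "dcomplete M D"
    unfolding dcomplete_def
  proof (intro allI impI)
    fix s :: "nat \<Rightarrow> _" assume a: "(\<forall>n. s n \<in> M) \<and> (\<forall>\<epsilon>>0. \<exists>N. \<forall>n\<ge>N. \<forall>m\<ge>N. D (s n) (s m) < \<epsilon>)"
    then have "MD.MCauchy s" unfolding MD.MCauchy_def by blast
    moreover have "MD.mcomplete" using mc unfolding mcomplete_of_def M_def D_def by simp
    ultimately obtain z where "limitin MD.mtopology s z sequentially" unfolding MD.mcomplete_def by blast
    then show "\<exists>z\<in>M. \<forall>\<epsilon>>0. \<exists>N. \<forall>n\<ge>N. D (s n) z < \<epsilon>"
      unfolding MD.limit_metric_sequentially by blast
  qed
  define w where "w x = p x x" for x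
  have w0: "\<And>x. x \<in> X \<Longrightarrow> w x \<ge> 0" using P0 unfolding w_def by blast
  have wlip: "\<And>x y. x \<in> X \<Longrightarrow> y \<in> X \<Longrightarrow> w x - w y \<le> d x y"
  proof -
    fix x y assume xy: "x \<in> X" "y \<in> X"
    have "p x x \<le> p x y" "p y y \<le> p x y" using P2[OF xy] P2[OF xy(2,1)] P3[OF xy] by auto
    then show "w x - w y \<le> d x y" using xy unfolding w_def d_def by simp
  qed
  have dpw: "\<And>x y. x \<in> X \<Longrightarrow> y \<in> X \<Longrightarrow> (d x y + w x + w y)/2 = p x y"
    unfolding d_def w_def by simp
  define W where "W z = Inf ((\<lambda>x. w x + D z (f x)) ` X)" for z
  have bdd: "bdd_below ((\<lambda>x. w x + D z (f x)) ` X)" for z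
    by (rule bdd_belowI[of _ 0]) (auto intro: add_nonneg_nonneg w0)
  have Wle: "\<And>x z. x \<in> X \<Longrightarrow> W z \<le> w x + D z (f x)"
    unfolding W_def by (rule cInf_lower) (auto intro: bdd)
  have Wge: "\<And>c z. (\<And>x. x \<in> X \<Longrightarrow> c \<le> w x + D z (f x)) \<Longrightarrow> c \<le> W z"
    unfolding W_def using assms(2) by (intro cInf_greatest) auto
  have W0: "\<And>z. W z \<ge> 0" by (rule Wge) (auto intro: add_nonneg_nonneg w0)
  have Wf: "\<And>x. x \<in> X \<Longrightarrow> W (f x) = w x"
  proof -
    fix x assume x: "x \<in> X"
    have "W (f x) \<le> w x" using Wle[OF x, of "f x"] fM[OF x] by simp
    moreover have "w x \<le> W (f x)"
    proof (rule Wge)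
      fix y assume y: "y \<in> X"
      show "w x \<le> w y + D (f x) (f y)" using wlip[OF x y] fD[OF x y] by simp
    qed
    ultimately show "W (f x) = w x" by simp
  qed
  have Wlip: "\<And>a b. a \<in> M \<Longrightarrow> b \<in> M \<Longrightarrow> W a - W b \<le> D a b"
  proof -
    fix a b assume ab: "a \<in> M" "b \<in> M"
    have "W a - D a b \<le> W b"
    proof (rule Wge)
      fix x assume x: "x \<in> X"
      have "D a (f x) \<le> D a b + D b (f x)" using MD.triangle[OF ab fM[OF x]] .
      then show "W a - D a b \<le> w x + D b (f x)" using Wle[OF x, of a] by linarith
    qed
    then show "W a - W b \<le> D a b" by linarith
  qed
  define f0 where "f0 = f x0"
  have f0M: "f0 \<in> M" using fM[OF x0] unfolding f0_def .
  define D0 where "D0 a b = (case a of None \<Rightarrow> (case b of None \<Rightarrow> 0 | Some b' \<Rightarrow> D f0 b' + 1)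
       | Some a' \<Rightarrow> (case b of None \<Rightarrow> D a' f0 + 1 | Some b' \<Rightarrow> D a' b'))" for a b
  define W0 where "W0 a = (case a of None \<Rightarrow> W f0 + 1 | Some a' \<Rightarrow> W a')" for a
  have D0s[simp]: "D0 None None = 0" "D0 None (Some b) = D f0 b + 1" "D0 (Some a) None = D a f0 + 1"
     "D0 (Some a) (Some b) = D a b" for a b unfolding D0_def by simp_all
  have W0s[simp]: "W0 None = W f0 + 1" "W0 (Some a) = W a" for a unfolding W0_def by simp_all
  define Z0 where "Z0 = insert None (Some ` M)"
  define Y0 where "Y0 = Some ` M"
  have Y0Z0: "Y0 \<subseteq> Z0" unfolding Y0_def Z0_def by auto
  define vl where "vl a = (case a of None \<Rightarrow> f0 | Some a' \<Rightarrow> a')" for a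
  define ind where "ind a b = (if (a = None) = (b = None) then 0 else (1::real))" for a b :: "('a \<Rightarrow> real) option"
  have D0alt: "D0 a b = D (vl a) (vl b) + ind a b" for a b
    unfolding vl_def ind_def by (cases a; cases b) (auto simp: MD.commute f0M)
  have W0alt: "W0 a = W (vl a) + (if a = None then 1 else 0)" for a
    unfolding vl_def by (cases a) auto
  have vlM: "vl a \<in> M" if "a \<in> Z0" for a using that f0M unfolding Z0_def vl_def by auto
  have mh: "mhyps Z0 D0 W0"
  proof -
    have Dn: "\<And>a b. D a b \<ge> 0" by simp
    have indn: "ind a b \<ge> 0" "ind a b = ind b a" "ind a c \<le> ind a b + ind b c" for a b c
      unfolding ind_def by auto
    have t1: "\<forall>a\<in>Z0. \<forall>b\<in>Z0. D0 a b \<ge> 0" unfolding D0alt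
      using Dn indn by (meson add_nonneg_nonneg)
    have t2: "\<forall>a\<in>Z0. \<forall>b\<in>Z0. D0 a b = D0 b a" unfolding D0alt using indn MD.commute by metis
    have t3: "\<forall>a\<in>Z0. \<forall>b\<in>Z0. D0 a b = 0 \<longleftrightarrow> a = b"
    proof (intro ballI)
      fix a b assume ab: "a \<in> Z0" "b \<in> Z0"
      have "D0 a b = 0 \<longleftrightarrow> D (vl a) (vl b) = 0 \<and> ind a b = 0"
        unfolding D0alt using Dn[of "vl a" "vl b"] indn(1)[of a b] by linarith
      also have "\<dots> \<longleftrightarrow> vl a = vl b \<and> ind a b = 0" using MD.zero vlM ab by blast
      also have "\<dots> \<longleftrightarrow> a = b" unfolding vl_def ind_def by (cases a; cases b) auto
      finally show "D0 a b = 0 \<longleftrightarrow> a = b" .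
    qed
    have t4: "\<forall>a\<in>Z0. \<forall>b\<in>Z0. \<forall>c\<in>Z0. D0 a c \<le> D0 a b + D0 b c"
    proof (intro ballI)
      fix a b c assume abc: "a \<in> Z0" "b \<in> Z0" "c \<in> Z0"
      have "D (vl a) (vl c) \<le> D (vl a) (vl b) + D (vl b) (vl c)" using MD.triangle vlM abc by blast
      then show "D0 a c \<le> D0 a b + D0 b c" unfolding D0alt using indn(3)[of a c b] by linarith
    qed
    have t5: "\<forall>a\<in>Z0. W0 a \<ge> 0" unfolding W0alt using W0 by (simp add: add_nonneg_nonneg)
    have t6: "\<forall>a\<in>Z0. \<forall>b\<in>Z0. W0 a - W0 b \<le> D0 a b"
    proof (intro ballI)
      fix a b assume ab: "a \<in> Z0" "b \<in> Z0"
      have "W (vl a) - W (vl b) \<le> D (vl a) (vl b)" using Wlip vlM ab by blast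
      moreover have "(if a = None then 1 else 0) - (if b = None then 1 else 0) \<le> ind a b"
        unfolding ind_def by auto
      ultimately show "W0 a - W0 b \<le> D0 a b" unfolding D0alt W0alt by linarith
    qed
    show ?thesis unfolding mhyps_def using t1 t2 t3 t4 t5 t6 by blast
  qed
  define q0 where "q0 a b = (D0 a b + W0 a + W0 b)/2" for a b
  have mhY: "mhyps Y0 D0 W0" using mhyps_subset[OF mh Y0Z0] .
  have dcZ: "dcomplete Z0 D0"
    unfolding dcomplete_def
  proof (intro allI impI)
    fix s :: "nat \<Rightarrow> _" assume a: "(\<forall>n. s n \<in> Z0) \<and> (\<forall>\<epsilon>>0. \<exists>N. \<forall>n\<ge>N. \<forall>m\<ge>N. D0 (s n) (s m) < \<epsilon>)"
    then have sZ: "\<And>n. s n \<in> Z0" and cau: "\<forall>\<epsilon>>0. \<exists>N. \<forall>n\<ge>N. \<forall>m\<ge>N. D0 (s n) (s m) < \<epsilon>" by blast+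
    obtain N1 where N1: "\<forall>n\<ge>N1. \<forall>m\<ge>N1. D0 (s n) (s m) < 1" using cau by (meson zero_less_one)
    have ge1: "\<And>a b. D0 None (Some b) \<ge> 1" "\<And>a b. D0 (Some a) None \<ge> 1" by simp_all
    show "\<exists>z\<in>Z0. \<forall>\<epsilon>>0. \<exists>N. \<forall>n\<ge>N. D0 (s n) z < \<epsilon>"
    proof (cases "s N1")
      case None
      have "s n = None" if "n \<ge> N1" for n
      proof (rule ccontr)
        assume "s n \<noteq> None"
        then obtain b where "s n = Some b" by auto
        then show False using N1 that None ge1(1)[of b] by (metis order_refl not_le)
      qed
      then have "\<forall>\<epsilon>>0. \<exists>N. \<forall>n\<ge>N. D0 (s n) None < \<epsilon>" by (metis D0s(1))
      then show ?thesis unfolding Z0_def by blast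
    next
      case (Some a0)
      have sS: "s n \<noteq> None" if "n \<ge> N1" for n
      proof
        assume "s n = None"
        then show False using N1 that Some ge1(2)[of a0] by (metis order_refl not_le)
      qed
      define t where "t n = vl (s n)" for n
      have tM: "\<And>n. t n \<in> M" unfolding t_def using vlM sZ by blast
      have st: "\<And>n. n \<ge> N1 \<Longrightarrow> s n = Some (t n)" unfolding t_def vl_def using sS by fastforce
      have "\<forall>\<epsilon>>0. \<exists>N. \<forall>n\<ge>N. \<forall>m\<ge>N. D (t n) (t m) < \<epsilon>"
      proof (intro allI impI)
        fix e :: real assume "e > 0"
        then obtain N where N: "\<forall>n\<ge>N. \<forall>m\<ge>N. D0 (s n) (s m) < e" using cau by blast
        show "\<exists>N. \<forall>n\<ge>N. \<forall>m\<ge>N. D (t n) (t m) < e"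
          using N st by (intro exI[of _ "max N N1"]) (metis D0s(4) max.bounded_iff)
      qed
      then obtain z where z: "z \<in> M" "\<forall>\<epsilon>>0. \<exists>N. \<forall>n\<ge>N. D (t n) z < \<epsilon>"
        using dcM tM unfolding dcomplete_def by blast
      show ?thesis
      proof (intro bexI[of _ "Some z"] allI impI)
        fix e :: real assume "e > 0"
        then obtain N where N: "\<forall>n\<ge>N. D (t n) z < e" using z by blast
        show "\<exists>N. \<forall>n\<ge>N. D0 (s n) (Some z) < e"
          using N st by (intro exI[of _ "max N N1"]) (metis D0s(4) max.bounded_iff)
      qed (use z in \<open>auto simp: Z0_def\<close>)
    qed
  qed
  have dcY: "dcomplete Y0 D0"
    unfolding dcomplete_def
  proof (intro allI impI)
    fix s :: "nat \<Rightarrow> _" assume a: "(\<forall>n. s n \<in> Y0) \<and> (\<forall>\<epsilon>>0. \<exists>N. \<forall>n\<ge>N. \<forall>m\<ge>N. D0 (s n) (s m) < \<epsilon>)"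
    have sZ: "\<forall>n. s n \<in> Z0" using a Y0Z0 by blast
    have "\<exists>z\<in>Z0. \<forall>\<epsilon>>0. \<exists>N. \<forall>n\<ge>N. D0 (s n) z < \<epsilon>"
      using dcZ[unfolded dcomplete_def, rule_format, of s] sZ a by blast
    then obtain z where z: "z \<in> Z0" "\<forall>\<epsilon>>0. \<exists>N. \<forall>n\<ge>N. D0 (s n) z < \<epsilon>"
      by blast
    have "z \<noteq> None"
    proof
      assume zN: "z = None"
      obtain N where "\<forall>n\<ge>N. D0 (s n) z < 1" using z(2) by (meson zero_less_one)
      then have "D0 (s N) None < 1" using zN by blast
      moreover have "s N \<in> Some ` M" using a unfolding Y0_def by blast
      then obtain b where "s N = Some b" by blast
      ultimately show False using MD.nonneg[of b f0] by simp
    qed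
    then have "z \<in> Y0" using z(1) unfolding Y0_def Z0_def by auto
    then show "\<exists>z\<in>Y0. \<forall>\<epsilon>>0. \<exists>N. \<forall>n\<ge>N. D0 (s n) z < \<epsilon>" using z(2) by blast
  qed
  have isoq: "isometry_on X p q0 (Some \<circ> f)"
    unfolding isometry_on_def q0_def using dpw fD Wf by simp
  have comp: "p_cauchy_completion X p S q0 (Some \<circ> f)" if SS: "S = Y0 \<or> S = Z0" for S
  proof -
    have mhS: "mhyps S D0 W0" using SS mh mhY by blast
    have dcS: "dcomplete S D0" using SS dcY dcZ by blast
    have sub: "(Some \<circ> f) ` X \<subseteq> S" using SS fM unfolding Y0_def Z0_def by auto
    have "pdense S q0 ((Some \<circ> f) ` X)"
      unfolding pdense_def pball_def
    proof (intro ballI allI impI)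
      fix a and e :: real assume aS: "a \<in> S" and e: "e > 0"
      show "\<exists>y\<in>(Some \<circ> f) ` X. y \<in> {y \<in> S. q0 a y < q0 a a + e}"
      proof (cases a)
        case None
        have "q0 a (Some f0) = q0 a a" unfolding q0_def None using f0M by simp
        moreover have "Some (f x0) \<in> S" using sub x0 by auto
        ultimately have "Some (f x0) \<in> {y \<in> S. q0 a y < q0 a a + e}" using e unfolding f0_def by simp
        moreover have "Some (f x0) \<in> (Some \<circ> f) ` X" using x0 by simp
        ultimately show ?thesis by blast
      next
        case (Some z)
        then have z: "z \<in> M" using aS SS unfolding Y0_def Z0_def by auto
        obtain x where x: "x \<in> X" "D z (f x) < e" using dens[OF z e] by blast
        have "Some (f x) \<in> S" using sub x by auto
        then have "q0 a (Some (f x)) < q0 a a + e"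
          unfolding q0_def using dense_pt[OF mhS aS _, of "Some (f x)" e] x Some by simp
        then show ?thesis using \<open>Some (f x) \<in> S\<close> x by auto
      qed
    qed
    then show ?thesis unfolding p_cauchy_completion_def
      using pm_from_metric[OF mhS] pc_from_dcomplete[OF mhS dcS] sub isoq
      unfolding q0_def[abs_def] by blast
  qed
  define seqset where "seqset z = {s. \<forall>n. s n \<in> X \<and> D z (f (s n)) < 1 / real (Suc n)}" for z
  define hz where "hz a = (case a of None \<Rightarrow> ({}, 1::nat) | Some z \<Rightarrow> (seqset z, 0))" for a
  have ne: "\<exists>s. s \<in> seqset z" if z: "z \<in> M" for z
  proof -
    have "\<forall>n. \<exists>x. x \<in> X \<and> D z (f x) < 1 / real (Suc n)"
    proof
      fix n
      have "(1::real) / real (Suc n) > 0" by simp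
      then show "\<exists>x. x \<in> X \<and> D z (f x) < 1 / real (Suc n)" using dens[OF z] by blast
    qed
    then have "\<exists>s. \<forall>n. s n \<in> X \<and> D z (f (s n)) < 1 / real (Suc n)" by (rule choice)
    then obtain s where "\<forall>n. s n \<in> X \<and> D z (f (s n)) < 1 / real (Suc n)" by blast
    then show ?thesis unfolding seqset_def by blast
  qed
  have inj: "inj_on hz Z0"
  proof (rule inj_onI)
    fix a b assume ab: "a \<in> Z0" "b \<in> Z0" "hz a = hz b"
    show "a = b"
    proof (cases "a = None \<or> b = None")
      case True
      then show ?thesis using ab(3) unfolding hz_def by (cases a; cases b) auto
    next
      case False
      then obtain z z' where zz: "a = Some z" "b = Some z'" by auto
      then have zM: "z \<in> M" "z' \<in> M" using ab unfolding Z0_def by auto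
      have "seqset z = seqset z'" using ab(3) zz unfolding hz_def by simp
      then obtain s where s1: "s \<in> seqset z" and s2: "s \<in> seqset z'" using ne[OF zM(1)] by auto
      have le: "D z z' \<le> 2 / real (Suc n)" for n
      proof -
        have sx: "s n \<in> X" and l1: "D z (f (s n)) < 1 / real (Suc n)" using s1 unfolding seqset_def by auto
        have l2: "D z' (f (s n)) < 1 / real (Suc n)" using s2 unfolding seqset_def by auto
        have tr: "D z z' \<le> D z (f (s n)) + D (f (s n)) z'" using MD.triangle[OF zM(1) fM[OF sx] zM(2)] .
        have "D (f (s n)) z' = D z' (f (s n))" using MD.commute by blast
        then show ?thesis using l1 l2 tr by simp
      qed
      have "D z z' = 0"
      proof (rule ccontr)
        assume "D z z' \<noteq> 0"
        then have "D z z' / 2 > 0" using MD.nonneg[of z z'] by linarith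
        then obtain n where n: "inverse (real (Suc n)) < D z z' / 2" using reals_Archimedean by blast
        have "D z z' \<le> 2 * inverse (real (Suc n))" using le[of n] by (simp add: divide_inverse)
        then show False using n by linarith
      qed
      then show "a = b" using zz zM by simp
    qed
  qed
  have injY: "inj_on hz Y0" using inj_on_subset[OF inj Y0Z0] .
  define pY where "pY a b = q0 (inv_into Y0 hz a) (inv_into Y0 hz b)" for a b
  define pZ where "pZ a b = q0 (inv_into Z0 hz a) (inv_into Z0 hz b)" for a b
  define i where "i = hz \<circ> (Some \<circ> f)"
  have cY: "p_cauchy_completion X p (hz ` Y0) pY i"
    unfolding pY_def[abs_def] i_def using transfer_completion[OF comp injY] by simp
  have cZ: "p_cauchy_completion X p (hz ` Z0) pZ i"
    unfolding pZ_def[abs_def] i_def using transfer_completion[OF comp injY] transfer_completion[OF comp inj] by simp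
  have noiso: "\<not> (\<exists>g. bij_betw g (hz ` Y0) (hz ` Z0) \<and> isometry_on (hz ` Y0) pY pZ g \<and> (\<forall>x\<in>X. g (i x) = i x))"
  proof
    assume "\<exists>g. bij_betw g (hz ` Y0) (hz ` Z0) \<and> isometry_on (hz ` Y0) pY pZ g \<and> (\<forall>x\<in>X. g (i x) = i x)"
    then obtain g where bij: "bij_betw g (hz ` Y0) (hz ` Z0)" and gi: "isometry_on (hz ` Y0) pY pZ g"
      and gx: "\<forall>x\<in>X. g (i x) = i x" by blast
    have "hz None \<in> hz ` Z0" unfolding Z0_def by simp
    then have "hz None \<in> g ` (hz ` Y0)" using bij unfolding bij_betw_def by simp
    then obtain z where z: "z \<in> M" and gz: "g (hz (Some z)) = hz None" unfolding Y0_def by auto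
    obtain x where x: "x \<in> X" "D z (f x) < 1/2" using dens[OF z] by (meson half_gt_zero zero_less_one)
    have in1: "hz (Some z) \<in> hz ` Y0" "hz (Some (f x)) \<in> hz ` Y0" using z fM[OF x(1)] unfolding Y0_def by auto
    have "pZ (g (hz (Some z))) (g (hz (Some (f x)))) = pY (hz (Some z)) (hz (Some (f x)))"
      using gi in1 unfolding isometry_on_def by blast
    moreover have "g (hz (Some (f x))) = hz (Some (f x))" using gx x(1) unfolding i_def by simp
    ultimately have eq: "pZ (hz None) (hz (Some (f x))) = pY (hz (Some z)) (hz (Some (f x)))" using gz by simp
    have "pZ (hz None) (hz (Some (f x))) = q0 None (Some (f x))"
      unfolding pZ_def using inj fM[OF x(1)] z by (simp add: Z0_def)
    moreover have "pY (hz (Some z)) (hz (Some (f x))) = q0 (Some z) (Some (f x))"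
      unfolding pY_def using injY fM[OF x(1)] z by (simp add: Y0_def)
    ultimately have eq2: "q0 None (Some (f x)) = q0 (Some z) (Some (f x))" using eq by simp
    have a1: "W (f x) - W f0 \<le> D f0 (f x)" using Wlip[OF fM[OF x(1)] f0M] MD.commute by simp
    have a2: "W z - W (f x) \<le> D z (f x)" using Wlip[OF z fM[OF x(1)]] .
    show False using eq2 a1 a2 x(2) unfolding q0_def by simp
  qed
  show ?thesis using cY cZ noiso by blast
qed

end
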